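(* Let $(X,G)$ be a minimal topological dynamical system. If $\pi_{eq}$ is almost $N$ to one for some $N\in\mathbb N\cup\{\infty\}$, then $|E|\ge N$ for every $E\in\mathcal X$.
   Context: $G$ is an infinite countable discrete group; a tds $(X,G)$ is a compact metric space with a $G$-action by homeomorphisms; minimal means no proper nonempty closed invariant subset. $\pi_{eq}:X\to X_{eq}$ is the factor map onto the maximal equicontinuous factor; it is almost $N$ to one if $\{y\in X_{eq}:|\pi_{eq}^{-1}(y)|=N\}$ is a residual subset of $X_{eq}$. $2^X$ is the space of nonempty closed subsets of $X$ with the Hausdorff metric, and $\mathcal X=\overline{\{\pi_{eq}^{-1}(y):y\in X_{eq}\}}\subset 2^X$. *)

theory Defs
  imports "HOL-Analysis.Analysis" "HOL-Library.Extended_Nat"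
begin

definition tds :: "'a::metric_space set \<Rightarrow> ('g::group_add \<Rightarrow> 'a \<Rightarrow> 'a) \<Rightarrow> bool" where
  "tds X act \<longleftrightarrow> compact X \<and>
     (\<forall>x\<in>X. act 0 x = x) \<and>
     (\<forall>g h. \<forall>x\<in>X. act (g + h) x = act g (act h x)) \<and>
     (\<forall>g. homeomorphism X X (act g) (act (- g)))"

definition minimal_tds :: "'a::metric_space set \<Rightarrow> ('g::group_add \<Rightarrow> 'a \<Rightarrow> 'a) \<Rightarrow> bool" where
  "minimal_tds X act \<longleftrightarrow> tds X act \<and>
     (\<forall>A. A \<subseteq> X \<and> A \<noteq> {} \<and> closed A \<and> (\<forall>g. act g ` A \<subseteq> A) \<longrightarrow> A = X)"

definition equicontinuous_tds :: "'a::metric_space set \<Rightarrow> ('g::group_add \<Rightarrow> 'a \<Rightarrow> 'a) \<Rightarrow> bool" where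
  "equicontinuous_tds X act \<longleftrightarrow> tds X act \<and>
     (\<forall>e>0. \<exists>d>0. \<forall>x\<in>X. \<forall>y\<in>X. dist x y < d \<longrightarrow> (\<forall>g. dist (act g x) (act g y) < e))"

definition factor_map ::
  "'a::metric_space set \<Rightarrow> ('g::group_add \<Rightarrow> 'a \<Rightarrow> 'a) \<Rightarrow> 'b::metric_space set \<Rightarrow> ('g \<Rightarrow> 'b \<Rightarrow> 'b)
     \<Rightarrow> ('a \<Rightarrow> 'b) \<Rightarrow> bool" where
  "factor_map X act Y actY p \<longleftrightarrow> tds X act \<and> tds Y actY \<and>
     continuous_on X p \<and> p ` X = Y \<and> (\<forall>g. \<forall>x\<in>X. p (act g x) = actY g (p x))"

text \<open>p : (X,act) \<rightarrow> (Y,actY) is the maximal equicontinuous factor map: Y is equicontinuous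
  and every equicontinuous factor of X factors through p. Every compact metric space embeds
  into the Hilbert cube, so it suffices to quantify over factors living in the type
  nat \<Rightarrow> real (with its product metric).\<close>
definition max_equicontinuous_factor ::
  "'a::metric_space set \<Rightarrow> ('g::group_add \<Rightarrow> 'a \<Rightarrow> 'a) \<Rightarrow> 'b::metric_space set \<Rightarrow> ('g \<Rightarrow> 'b \<Rightarrow> 'b)
     \<Rightarrow> ('a \<Rightarrow> 'b) \<Rightarrow> bool" where
  "max_equicontinuous_factor X act Y actY p \<longleftrightarrow>
     factor_map X act Y actY p \<and> equicontinuous_tds Y actY \<and>
     (\<forall>(Z :: (nat \<Rightarrow> real) set) actZ r.
        factor_map X act Z actZ r \<and> equicontinuous_tds Z actZ \<longrightarrow>
        (\<exists>f. factor_map Y actY Z actZ f \<and> (\<forall>x\<in>X. r x = f (p x))))"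

definition ecard :: "'a set \<Rightarrow> enat" where
  "ecard S = (if finite S then enat (card S) else \<infinity>)"

definition residual_in :: "'b::topological_space set \<Rightarrow> 'b set \<Rightarrow> bool" where
  "residual_in Y A \<longleftrightarrow> A \<subseteq> Y \<and> (\<exists>U :: nat \<Rightarrow> 'b set.
     (\<forall>n. openin (top_of_set Y) (U n) \<and> Y \<subseteq> closure (U n)) \<and> Y \<inter> (\<Inter>n. U n) \<subseteq> A)"

definition almost_N_to_one :: "'a set \<Rightarrow> 'b::topological_space set \<Rightarrow> ('a \<Rightarrow> 'b) \<Rightarrow> enat \<Rightarrow> bool" where
  "almost_N_to_one X Y p N \<longleftrightarrow> residual_in Y {y\<in>Y. ecard {x\<in>X. p x = y} = N}"

definition hausdist :: "'a::metric_space set \<Rightarrow> 'a set \<Rightarrow> real" where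
  "hausdist A B = max (SUP a\<in>A. infdist a B) (SUP b\<in>B. infdist b A)"

text \<open>The closure in 2^X (Hausdorff metric) of the set of fibres of p.\<close>
definition fibre_closure :: "'a::metric_space set \<Rightarrow> 'b set \<Rightarrow> ('a \<Rightarrow> 'b) \<Rightarrow> 'a set set" where
  "fibre_closure X Y p = {E. E \<noteq> {} \<and> closed E \<and> E \<subseteq> X \<and>
      (\<forall>e>0. \<exists>y\<in>Y. hausdist E {x\<in>X. p x = y} < e)}"

end

theory Submission
  imports Defs
begin

lemma infdist_lessD:
  assumes "A \<noteq> {}" "infdist x A < d" shows "\<exists>a\<in>A. dist x a < d"
  using assms cInf_lessD[of "(\<lambda>a. dist x a) ` A" d] by (auto simp: infdist_notempty)

lemma uc_helper:
  fixes f :: "'a::metric_space \<Rightarrow> 'b::metric_space"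
  assumes "continuous_on S f" "compact S" "e > 0"
  shows "\<exists>d>0. \<forall>x\<in>S. \<forall>x'\<in>S. dist x' x < d \<longrightarrow> dist (f x') (f x) < e"
  using compact_uniformly_continuous[OF assms(1,2)] assms(3) unfolding uniformly_continuous_on_def
  by blast

theorem lemma3p1:
  fixes X :: "'a::metric_space set" and act :: "'g::group_add \<Rightarrow> 'a \<Rightarrow> 'a"
    and Y :: "'b::metric_space set" and actY :: "'g \<Rightarrow> 'b \<Rightarrow> 'b"
    and p :: "'a \<Rightarrow> 'b" and N :: enat
  assumes "countable (UNIV :: 'g set)" and "infinite (UNIV :: 'g set)"
    and "minimal_tds X act"
    and "max_equicontinuous_factor X act Y actY p"
    and "almost_N_to_one X Y p N"
  shows "\<forall>E \<in> fibre_closure X Y p. ecard E \<ge> N"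
proof
  fix E assume E: "E \<in> fibre_closure X Y p"
  define fib where "fib y = {x\<in>X. p x = y}" for y
  from assms(3) have tdsX: "tds X act"
    and minX: "\<And>A. A \<subseteq> X \<Longrightarrow> A \<noteq> {} \<Longrightarrow> closed A \<Longrightarrow> (\<forall>g. act g ` A \<subseteq> A) \<Longrightarrow> A = X"
    by (auto simp: minimal_tds_def)
  from assms(4) have fm: "factor_map X act Y actY p" by (simp add: max_equicontinuous_factor_def)
  then have tdsY: "tds Y actY" and contp: "continuous_on X p" and pX: "p ` X = Y"
    and equiv: "\<And>g x. x \<in> X \<Longrightarrow> p (act g x) = actY g (p x)"
    by (auto simp: factor_map_def)
  from tdsX have cX: "compact X"
    and homX: "\<And>g. homeomorphism X X (act g) (act (-g))" by (auto simp: tds_def)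
  from tdsY have cY: "compact Y"
    and actYadd: "\<And>g h y. y\<in>Y \<Longrightarrow> actY (g+h) y = actY g (actY h y)"
    and actY0: "\<And>y. y\<in>Y \<Longrightarrow> actY 0 y = y"
    and homY: "\<And>g. homeomorphism Y Y (actY g) (actY (-g))" by (auto simp: tds_def)
  have actX: "\<And>g x. x\<in>X \<Longrightarrow> act g x \<in> X" using homX unfolding homeomorphism_def by blast
  have actYY: "\<And>g y. y\<in>Y \<Longrightarrow> actY g y \<in> Y" using homY unfolding homeomorphism_def by blast
  have contact: "\<And>g. continuous_on X (act g)" using homX unfolding homeomorphism_def by blast
  have contactY: "\<And>g. continuous_on Y (actY g)" using homY unfolding homeomorphism_def by blast
  have invX: "\<And>g x. x\<in>X \<Longrightarrow> act g (act (-g) x) = x" using homX unfolding homeomorphism_def by blast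
  have invY: "\<And>g y. y\<in>Y \<Longrightarrow> actY (-g) (actY g y) = y" using homY unfolding homeomorphism_def by blast
  have clY: "closed Y" using cY compact_imp_closed by auto
  have clX: "closed X" using cX compact_imp_closed by auto

  have orbit: "\<exists>g. dist (actY g y) y0 < r" if y: "y\<in>Y" and y0: "y0\<in>Y" and r: "r>0" for y y0 and r :: real
  proof -
    define B where "B = closure (range (\<lambda>g. actY g y))"
    have orbY: "range (\<lambda>g. actY g y) \<subseteq> Y" using actYY y by auto
    have BY: "B \<subseteq> Y" unfolding B_def using orbY clY closure_minimal by blast
    have Binv: "actY g ` B \<subseteq> B" for g
    proof -
      have "actY g ` (range (\<lambda>h. actY h y)) \<subseteq> range (\<lambda>h. actY h y)"
        by (auto simp flip: actYadd[OF y])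
      also have "\<dots> \<subseteq> B" unfolding B_def by (rule closure_subset)
      finally have sub: "actY g ` (range (\<lambda>h. actY h y)) \<subseteq> B" .
      show ?thesis unfolding B_def
        by (rule image_closure_subset[OF continuous_on_subset[OF contactY BY[unfolded B_def]] _ sub[unfolded B_def]]) simp
    qed
    define A where "A = {x\<in>X. p x \<in> B}"
    have "closedin (top_of_set X) (X \<inter> p -` B)"
      by (rule continuous_closedin_preimage[OF contp]) (simp add: B_def)
    moreover have "X \<inter> p -` B = A" unfolding A_def by auto
    ultimately have clA: "closed A" using closedin_closed_trans clX by metis
    obtain x where x: "x \<in> X" "p x = y" using pX y by auto
    have "y \<in> B" unfolding B_def using actY0[OF y] closure_subset by (metis rangeI subsetD)
    then have "A \<noteq> {}" using x unfolding A_def by auto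
    moreover have "\<forall>g. act g ` A \<subseteq> A"
    proof (intro allI subsetI)
      fix g z assume "z \<in> act g ` A"
      then obtain x where "x \<in> A" "z = act g x" by auto
      then have xX: "x \<in> X" and pxB: "p x \<in> B" and zx: "z = act g x" unfolding A_def by auto
      have "actY g (p x) \<in> B" using Binv[of g] pxB by blast
      then show "z \<in> A" using equiv[OF xX] actX[OF xX] zx unfolding A_def by auto
    qed
    ultimately have "A = X" using minX clA unfolding A_def by auto
    obtain x0 where "x0 \<in> X" "p x0 = y0" using pX y0 by auto
    then have "y0 \<in> B" using \<open>A = X\<close> unfolding A_def by auto
    then show ?thesis unfolding B_def closure_approachable using r by auto
  qed

  show "N \<le> ecard E"
  proof (cases "finite E")
    case False
    then show ?thesis by (simp add: ecard_def)
  next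
    case True
    define m where "m = card E"
    from E have Ene: "E \<noteq> {}" and EX: "E \<subseteq> X"
      and Eapp: "\<And>e. e > 0 \<Longrightarrow> \<exists>y\<in>Y. hausdist E (fib y) < e"
      unfolding fibre_closure_def fib_def by auto
    obtain e0 where e0: "e0 \<in> E" using Ene by auto
    have e0X: "e0 \<in> X" using e0 EX by auto
    have m1: "m \<ge> 1" using True Ene unfolding m_def by (simp add: Suc_leI card_gt_0_iff)
    obtain Bd where Bd: "\<forall>x\<in>X. dist e0 x \<le> Bd"
      using compact_imp_bounded[OF cX] bounded_any_center by metis
    have approx: "\<exists>y'\<in>Y. dist y' y0 < r \<and> (\<exists>F. finite F \<and> card F \<le> m \<and> fib y' \<subseteq> (\<Union>f\<in>F. ball f \<epsilon>))"
      if ep: "\<epsilon> > 0" and y0: "y0 \<in> Y" and r: "r > 0" for \<epsilon> r :: real and y0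
    proof -
      have y: "p e0 \<in> Y" using pX e0X by auto
      obtain g where g: "dist (actY g (p e0)) y0 < r/2" using orbit[OF y y0] r by (meson half_gt_zero)
      obtain \<eta> where eta: "\<eta> > 0" "\<forall>z\<in>Y. \<forall>z'\<in>Y. dist z' z < \<eta> \<longrightarrow> dist (actY g z') (actY g z) < r/2"
        using uc_helper[OF contactY cY, of "r/2" g] r by auto
      obtain \<theta> where th: "\<theta> > 0" "\<forall>a\<in>X. \<forall>b\<in>X. dist b a < \<theta> \<longrightarrow> dist (p b) (p a) < \<eta>"
        using uc_helper[OF contp cX eta(1)] by auto
      obtain \<delta>0 where d0: "\<delta>0 > 0" "\<forall>a\<in>X. \<forall>b\<in>X. dist b a < \<delta>0 \<longrightarrow> dist (act g b) (act g a) < \<epsilon>"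
        using uc_helper[OF contact cX ep, of g] by auto
      define \<delta> where "\<delta> = min \<theta> \<delta>0"
      have dpos: "\<delta> > 0" using th d0 unfolding \<delta>_def by auto
      obtain yd where yd: "yd \<in> Y" "hausdist E (fib yd) < \<delta>" using Eapp[OF dpos] by auto
      have fibne: "fib yd \<noteq> {}" using pX yd unfolding fib_def by auto
      have h1: "(SUP a\<in>E. infdist a (fib yd)) < \<delta>" and h2: "(SUP b\<in>fib yd. infdist b E) < \<delta>"
        using yd(2) unfolding hausdist_def by auto
      have "infdist e0 (fib yd) \<le> (SUP a\<in>E. infdist a (fib yd))"
        by (rule cSUP_upper[OF e0]) (simp add: True)
      then have "infdist e0 (fib yd) < \<delta>" using h1 by linarith
      then obtain x where x: "x \<in> fib yd" "dist e0 x < \<delta>" using infdist_lessD[OF fibne] by blast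
      have xX: "x \<in> X" and px: "p x = yd" using x unfolding fib_def by auto
      have "dist (p x) (p e0) < \<eta>" using th(2) xX e0X x(2) unfolding \<delta>_def by (simp add: dist_commute)
      then have "dist (actY g yd) (actY g (p e0)) < r/2" using eta(2) yd(1) y px by auto
      then have close: "dist (actY g yd) y0 < r" using g dist_triangle[of "actY g yd" y0 "actY g (p e0)"] by linarith
      have bdd: "bdd_above ((\<lambda>b. infdist b E) ` fib yd)"
      proof (rule bdd_aboveI2)
        fix b assume "b \<in> fib yd"
        then have "b \<in> X" unfolding fib_def by auto
        then show "infdist b E \<le> Bd" using infdist_le[OF e0, of b] Bd by (metis dist_commute order_trans)
      qed
      have near: "\<exists>e\<in>E. dist b e < \<delta>" if "b \<in> fib yd" for b
      proof -
        have "infdist b E \<le> (SUP b\<in>fib yd. infdist b E)" by (rule cSUP_upper[OF that bdd])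
        then have "infdist b E < \<delta>" using h2 by linarith
        then show ?thesis using infdist_lessD[OF Ene] by blast
      qed
      show ?thesis
      proof (intro bexI conjI exI)
        show "actY g yd \<in> Y" using actYY yd by auto
        show "dist (actY g yd) y0 < r" by (rule close)
        show "finite (act g ` E)" using True by simp
        show "card (act g ` E) \<le> m" unfolding m_def by (rule card_image_le[OF True])
        show "fib (actY g yd) \<subseteq> (\<Union>f\<in>act g ` E. ball f \<epsilon>)"
        proof
          fix x' assume "x' \<in> fib (actY g yd)"
          then have x'X: "x' \<in> X" and px': "p x' = actY g yd" unfolding fib_def by auto
          define z where "z = act (-g) x'"
          have zX: "z \<in> X" unfolding z_def using actX x'X by auto
          have "p z = actY (-g) (actY g yd)" unfolding z_def using equiv x'X px' by auto
          also have "\<dots> = yd" using invY yd by auto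
          finally have "z \<in> fib yd" using zX unfolding fib_def by auto
          then obtain e where e: "e \<in> E" "dist z e < \<delta>" using near by blast
          have "dist (act g z) (act g e) < \<epsilon>" using d0(2) zX EX e unfolding \<delta>_def by auto
          moreover have "act g z = x'" unfolding z_def using invX x'X by auto
          ultimately have "x' \<in> ball (act g e) \<epsilon>" by (simp add: dist_commute)
          then show "x' \<in> (\<Union>f\<in>act g ` E. ball f \<epsilon>)" using e by auto
        qed
      qed
    qed

    define Ok where "Ok k = {y'\<in>Y. \<exists>F. finite F \<and> card F \<le> m \<and> fib y' \<subseteq> (\<Union>f\<in>F. ball f (1/(real k+1)))}" for k :: nat
    have Oopen: "openin (top_of_set Y) (Ok k)" for k
      unfolding openin_subopen[of _ "Ok k"]
    proof
      fix y' assume "y' \<in> Ok k"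
      then obtain F where F: "y'\<in>Y" "finite F" "card F \<le> m" "fib y' \<subseteq> (\<Union>f\<in>F. ball f (1/(real k+1)))"
        unfolding Ok_def by auto
      define W where "W = (\<Union>f\<in>F. ball f (1/(real k+1)))"
      have oW: "open W" unfolding W_def by auto
      have "compact (p ` (X - W))"
        by (rule compact_continuous_image[OF continuous_on_subset[OF contp] compact_diff[OF cX oW]]) auto
      have "closedin (top_of_set Y) (p ` (X - W))"
      proof (rule closed_subset)
        show "p ` (X - W) \<subseteq> Y" using pX by auto
        show "closed (p ` (X - W))" using \<open>compact (p ` (X - W))\<close> by (rule compact_imp_closed)
      qed
      then have op: "openin (top_of_set Y) (Y - p ` (X - W))"
        by (rule openin_diff[OF openin_subtopology_self])
      have "y' \<in> Y - p ` (X - W)" using F unfolding W_def fib_def by auto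
      moreover have "Y - p ` (X - W) \<subseteq> Ok k"
      proof
        fix y'' assume y'': "y'' \<in> Y - p ` (X - W)"
        then have "fib y'' \<subseteq> W" unfolding fib_def by auto
        then show "y'' \<in> Ok k" using y'' F unfolding Ok_def W_def by auto
      qed
      ultimately show "\<exists>T. openin (top_of_set Y) T \<and> y' \<in> T \<and> T \<subseteq> Ok k" using op by blast
    qed
    have Odense: "Y \<subseteq> closure (Ok k)" for k
    proof
      fix y0 assume y0: "y0 \<in> Y"
      show "y0 \<in> closure (Ok k)" unfolding closure_approachable
      proof (intro allI impI)
        fix r :: real assume r: "r > 0"
        have "(1/(real k+1)) > 0" by simp
        from approx[OF this y0 r] show "\<exists>y\<in>Ok k. dist y y0 < r" unfolding Ok_def by auto
      qed
    qed
    from assms(5) obtain U :: "nat \<Rightarrow> 'b set" where U0: "\<forall>n. openin (top_of_set Y) (U n) \<and> Y \<subseteq> closure (U n)"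
      and UR0: "Y \<inter> (\<Inter>n. U n) \<subseteq> {y\<in>Y. ecard {x\<in>X. p x = y} = N}"
      unfolding almost_N_to_one_def residual_in_def by auto
    have U: "\<And>n. openin (top_of_set Y) (U n)" "\<And>n. Y \<subseteq> closure (U n)" using U0 by auto
    have UR: "Y \<inter> (\<Inter>n. U n) \<subseteq> {y\<in>Y. ecard (fib y) = N}" using UR0 unfolding fib_def .
    define G where "G = range U \<union> range Ok"
    have "(top_of_set Y) closure_of \<Inter>G = topspace (top_of_set Y)"
    proof (rule Baire_category)
      show "completely_metrizable_space (top_of_set Y) \<or>
        locally_compact_space (top_of_set Y) \<and> regular_space (top_of_set Y)"
      proof (intro disjI2 conjI)
        have "compactin euclidean Y" using cY by simp
        then show "locally_compact_space (top_of_set Y)"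
          by (intro compact_imp_locally_compact_space compact_space_subtopology)
        show "regular_space (top_of_set Y)"
          by (rule regular_space_subtopology[OF regular_space_euclidean])
      qed
      show "countable G" unfolding G_def by simp
      fix T assume T: "T \<in> G"
      then obtain n where "T = U n \<or> T = Ok n" unfolding G_def by auto
      then have oT: "openin (top_of_set Y) T" and dT: "Y \<subseteq> closure T"
        using U(1)[of n] U(2)[of n] Oopen[of n] Odense[of n] by auto
      have "T \<subseteq> Y" using openin_subset[OF oT] by simp
      then have "(top_of_set Y) closure_of T = Y"
        using dT by (auto simp: closure_of_subtopology Int_absorb1)
      then show "openin (top_of_set Y) T \<and> (top_of_set Y) closure_of T = topspace (top_of_set Y)"
        using oT by simp
    qed
    moreover have "Y \<noteq> {}" using pX e0X by auto
    ultimately have "Y \<inter> \<Inter>G \<noteq> {}"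
    proof -
      assume c1: "(top_of_set Y) closure_of \<Inter>G = topspace (top_of_set Y)" and c2: "Y \<noteq> {}"
      show "Y \<inter> \<Inter>G \<noteq> {}"
      proof
        assume "Y \<inter> \<Inter>G = {}"
        then have "(top_of_set Y) closure_of \<Inter>G = {}"
          using closure_of_restrict[of "top_of_set Y" "\<Inter>G"] by simp
        then show False using c1 c2 by simp
      qed
    qed
    then obtain ys where ys0: "ys \<in> Y" "ys \<in> \<Inter>G" by blast
    then have ys: "ys \<in> Y" "\<And>n. ys \<in> U n" "\<And>k. ys \<in> Ok k" unfolding G_def by auto
    have Nys: "ecard (fib ys) = N" using UR ys by blast
    have fin: "finite (fib ys) \<and> card (fib ys) \<le> m"
    proof (rule ccontr)
      assume "\<not> (finite (fib ys) \<and> card (fib ys) \<le> m)"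
      then obtain S where S: "S \<subseteq> fib ys" "finite S" "card S = Suc m"
      proof (cases "finite (fib ys)")
        case True
        then have "Suc m \<le> card (fib ys)" using \<open>\<not> (finite (fib ys) \<and> card (fib ys) \<le> m)\<close> by auto
        then show ?thesis using obtain_subset_with_card_n that by metis
      next
        case False
        then show ?thesis using infinite_arbitrarily_large that by metis
      qed
      define P where "P = {(a,b). a\<in>S \<and> b\<in>S \<and> a\<noteq>b}"
      define D where "D = (\<lambda>(a,b). dist a b) ` P"
      have "P \<subseteq> S \<times> S" unfolding P_def by auto
      then have finP: "finite P" using finite_cartesian_product[OF S(2) S(2)] finite_subset by blast
      then have finD: "finite D" unfolding D_def by simp
      have "\<not> card S \<le> Suc 0" using S m1 by simp
      then obtain a1 a2 where "a1 \<in> S" "a2 \<in> S" "a1 \<noteq> a2" using card_le_Suc0_iff_eq[OF S(2)] by blast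
      then have "D \<noteq> {}" unfolding D_def P_def by auto
      define \<mu> where "\<mu> = Min D"
      have "\<mu> \<in> D" unfolding \<mu>_def using Min_in finD \<open>D \<noteq> {}\<close> by blast
      then have mupos: "\<mu> > 0" unfolding D_def P_def by auto
      have mule: "\<mu> \<le> dist a b" if "a \<in> S" "b \<in> S" "a \<noteq> b" for a b
      proof -
        have "(a,b) \<in> P" unfolding P_def using that by auto
        then have "dist a b \<in> D" unfolding D_def by force
        then show ?thesis unfolding \<mu>_def by (rule Min_le[OF finD])
      qed
      obtain k where k: "inverse (real (Suc k)) < \<mu>/2" using reals_Archimedean[of "\<mu>/2"] mupos by auto
      define \<epsilon> where "\<epsilon> = 1/(real k+1)"
      have eps: "2 * \<epsilon> < \<mu>" using k unfolding \<epsilon>_def by (simp add: field_simps)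
      obtain F where F: "finite F" "card F \<le> m" "fib ys \<subseteq> (\<Union>f\<in>F. ball f \<epsilon>)"
        using ys(3)[of k] unfolding Ok_def \<epsilon>_def by auto
      define h where "h a = (SOME f. f \<in> F \<and> dist f a < \<epsilon>)" for a
      have hF: "h a \<in> F \<and> dist (h a) a < \<epsilon>" if "a \<in> S" for a
      proof -
        have "a \<in> (\<Union>f\<in>F. ball f \<epsilon>)" using that S(1) F(3) by blast
        then have "\<exists>f. f \<in> F \<and> dist f a < \<epsilon>" by (auto simp: mem_ball)
        then show ?thesis unfolding h_def by (rule someI_ex)
      qed
      have "\<not> inj_on h S"
      proof
        assume "inj_on h S"
        then have "card S \<le> card F" using card_inj_on_le[of h S F] hF F(1) by auto
        then show False using S F by simp
      qed
      then obtain a b where ab: "a \<in> S" "b \<in> S" "a \<noteq> b" "h a = h b" unfolding inj_on_def by blast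
      have "dist a b \<le> dist a (h a) + dist (h b) b" using dist_triangle[of a b "h a"] ab(4) by simp
      also have "\<dots> < 2 * \<epsilon>" using hF[OF ab(1)] hF[OF ab(2)] by (simp add: dist_commute)
      finally show False using eps mule[OF ab(1-3)] by linarith
    qed
    then have "N = enat (card (fib ys))" using Nys unfolding ecard_def by simp
    also have "\<dots> \<le> enat m" using fin by simp
    also have "\<dots> = ecard E" unfolding ecard_def m_def using True by simp
    finally show ?thesis .
  qed
qed

end
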